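(* Let $E$ be a finite set, $X_1,\ldots,X_n$ fuzzy subsets of $E$, $l_1,\ldots,l_n\in\{0,1\}$, and $\Phi_{l_1,\ldots,l_n}(Y_1,\ldots,Y_n)=Y_1^{(l_1)}\cap\cdots\cap Y_n^{(l_n)}$. Then for every $j\in\{0,\ldots,|E|\}$, $$\mathcal{F}^A(Q^{j,1}_{exactly})\big(X_1^{(l_1)}\tilde\cap\cdots\tilde\cap X_n^{(l_n)}\big)=\sum_{\substack{Y\in\mathcal{P}(E):\\|Y|=j}} m_{X_1^{(l_1)}\tilde\cap\cdots\tilde\cap X_n^{(l_n)}}(Y)=\sum_{\substack{Y_1,\ldots,Y_n\in\mathcal{P}(E):\\|Y_1\cap\cdots\cap Y_n|=j}} m_{X_1^{(l_1)}}(Y_1)\cdots m_{X_n^{(l_n)}}(Y_n)=\mathcal{F}^A(Q^{j,1}_{exactly}\circ\Phi_{l_1,\ldots,l_n})(X_1,\ldots,X_n).$$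
   Context: For a fuzzy set $X$ on $E$ and crisp $Y\subseteq E$, $m_X(Y)=\prod_{e\in Y}\mu_X(e)\prod_{e\in E\setminus Y}(1-\mu_X(e))$. For a semi-fuzzy quantifier $Q:\mathcal{P}(E)^n\to[0,1]$, $\mathcal{F}^A(Q)(X_1,\ldots,X_n)=\sum_{Y_1,\ldots,Y_n\in\mathcal{P}(E)}m_{X_1}(Y_1)\cdots m_{X_n}(Y_n)Q(Y_1,\ldots,Y_n)$. For crisp sets $Y^{(1)}=Y$, $Y^{(0)}=E\setminus Y$; for fuzzy sets $X^{(1)}=X$, $X^{(0)}$ has membership $1-\mu_X$, and $\tilde\cap$ is the pointwise product. $Q^{j,1}_{exactly}(Y)=1$ if $|Y|=j$ and $0$ otherwise; $(Q^{j,1}_{exactly}\circ\Phi_{l_1,\ldots,l_n})(Y_1,\ldots,Y_n)=Q^{j,1}_{exactly}(\Phi_{l_1,\ldots,l_n}(Y_1,\ldots,Y_n))$. *)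

theory Defs
  imports Complex_Main "HOL-Library.FuncSet"
begin

text \<open>Fuzzy subsets of a finite ground set E are membership functions 'a \<Rightarrow> real
  (values in [0,1] on E, assumed in the theorem).  Tuples of n sets are
  functions on the index set {..<n}.\<close>

definition mass :: "'a set \<Rightarrow> ('a \<Rightarrow> real) \<Rightarrow> 'a set \<Rightarrow> real" where
  "mass E \<mu> Y = (\<Prod>e\<in>Y. \<mu> e) * (\<Prod>e\<in>E - Y. 1 - \<mu> e)"

definition FA :: "'a set \<Rightarrow> nat \<Rightarrow> ((nat \<Rightarrow> 'a set) \<Rightarrow> real) \<Rightarrow> (nat \<Rightarrow> 'a \<Rightarrow> real) \<Rightarrow> real" where
  "FA E n Q X = (\<Sum>Ys\<in>PiE {..<n} (\<lambda>_. Pow E). (\<Prod>i<n. mass E (X i) (Ys i)) * Q Ys)"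

definition cpow :: "'a set \<Rightarrow> nat \<Rightarrow> 'a set \<Rightarrow> 'a set" where
  "cpow E l Y = (if l = 1 then Y else E - Y)"

definition fpow :: "nat \<Rightarrow> ('a \<Rightarrow> real) \<Rightarrow> ('a \<Rightarrow> real)" where
  "fpow l \<mu> = (if l = 1 then \<mu> else (\<lambda>e. 1 - \<mu> e))"

definition fint :: "nat \<Rightarrow> (nat \<Rightarrow> nat) \<Rightarrow> (nat \<Rightarrow> 'a \<Rightarrow> real) \<Rightarrow> 'a \<Rightarrow> real" where
  "fint n l X = (\<lambda>e. \<Prod>i<n. fpow (l i) (X i) e)"

definition Phi :: "'a set \<Rightarrow> nat \<Rightarrow> (nat \<Rightarrow> nat) \<Rightarrow> (nat \<Rightarrow> 'a set) \<Rightarrow> 'a set" where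
  "Phi E n l Ys = (\<Inter>i\<in>{..<n}. cpow E (l i) (Ys i))"

definition Q_exactly :: "nat \<Rightarrow> 'a set \<Rightarrow> real" where
  "Q_exactly j Y = (if card Y = j then 1 else 0)"

end

theory Submission
  imports Defs
begin

lemma mass_alt:
  assumes "Y \<subseteq> E" "finite E"
  shows "mass E f Y = (\<Prod>e\<in>E. if e \<in> Y then f e else 1 - f e)"
proof -
  have "E \<inter> {e. e \<in> Y} = Y" "E \<inter> - {e. e \<in> Y} = E - Y" using assms by auto
  then show ?thesis unfolding mass_def using assms(2) by (simp add: prod.If_cases)
qed

lemma fiber:
  fixes F :: "'i \<Rightarrow> 'a \<Rightarrow> real"
  assumes fE: "finite E" and fI: "finite I" and ne: "I \<noteq> {}" and YE: "Y \<subseteq> E"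
  shows "(\<Sum>Ys\<in>{Ys \<in> PiE I (\<lambda>_. Pow E). (\<Inter>i\<in>I. Ys i) = Y}. \<Prod>i\<in>I. mass E (F i) (Ys i))
         = mass E (\<lambda>e. \<Prod>i\<in>I. F i e) Y"
proof -
  define h where "h e B = (\<Prod>i\<in>B. F i e) * (\<Prod>i\<in>I - B. 1 - F i e)" for e B
  define col where "col Ys = (\<lambda>e\<in>E. {i\<in>I. e \<in> Ys i})" for Ys :: "'i \<Rightarrow> 'a set"
  define row where "row c = (\<lambda>i\<in>I. {e\<in>E. i \<in> c e})" for c :: "'a \<Rightarrow> 'i set"
  define S where "S = {Ys \<in> PiE I (\<lambda>_. Pow E). (\<Inter>i\<in>I. Ys i) = Y}"
  define T where "T = PiE E (\<lambda>e. if e \<in> Y then {I} else Pow I - {I})"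
  have step1: "(\<Prod>i\<in>I. mass E (F i) (Ys i)) = (\<Prod>e\<in>E. h e (col Ys e))" if "Ys \<in> S" for Ys
  proof -
    have sub: "Ys i \<subseteq> E" if "i \<in> I" for i using \<open>Ys \<in> S\<close> that unfolding S_def by (auto simp: PiE_iff)
    have "(\<Prod>i\<in>I. mass E (F i) (Ys i)) = (\<Prod>i\<in>I. \<Prod>e\<in>E. if e \<in> Ys i then F i e else 1 - F i e)"
      using sub fE by (intro prod.cong refl mass_alt) auto
    also have "\<dots> = (\<Prod>e\<in>E. \<Prod>i\<in>I. if e \<in> Ys i then F i e else 1 - F i e)"
      by (rule prod.swap)
    also have "\<dots> = (\<Prod>e\<in>E. h e (col Ys e))"
    proof (intro prod.cong refl)
      fix e assume "e \<in> E"
      have "I \<inter> {i. e \<in> Ys i} = col Ys e" "I \<inter> - {i. e \<in> Ys i} = I - col Ys e"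
        using \<open>e \<in> E\<close> by (auto simp: col_def)
      then show "(\<Prod>i\<in>I. if e \<in> Ys i then F i e else 1 - F i e) = h e (col Ys e)"
        unfolding h_def using fI by (simp add: prod.If_cases)
    qed
    finally show ?thesis .
  qed
  have step2: "(\<Sum>Ys\<in>S. \<Prod>e\<in>E. h e (col Ys e)) = (\<Sum>c\<in>T. \<Prod>e\<in>E. h e (c e))"
  proof (rule sum.reindex_bij_witness[where i=row and j=col])
    fix Ys assume "Ys \<in> S"
    then have Ys: "Ys \<in> PiE I (\<lambda>_. Pow E)" "(\<Inter>i\<in>I. Ys i) = Y" unfolding S_def by auto
    show "row (col Ys) = Ys"
      using Ys(1) by (auto simp: row_def col_def PiE_iff fun_eq_iff extensional_def)
    show "col Ys \<in> T"
      using Ys YE ne unfolding T_def col_def by (auto simp: PiE_iff)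
    show "(\<Prod>e\<in>E. h e (col Ys e)) = (\<Prod>e\<in>E. h e (col Ys e))" by simp
  next
    fix c assume "c \<in> T"
    then have c: "\<And>e. e \<in> E \<Longrightarrow> e \<in> Y \<Longrightarrow> c e = I"
      "\<And>e. e \<in> E \<Longrightarrow> e \<notin> Y \<Longrightarrow> c e \<subseteq> I \<and> c e \<noteq> I"
      "\<And>e. e \<notin> E \<Longrightarrow> c e = undefined"
      unfolding T_def by (auto simp: PiE_iff extensional_def split: if_splits)
    show "col (row c) = c"
      using c by (auto simp: row_def col_def fun_eq_iff)
    have "(\<Inter>i\<in>I. row c i) = Y"
    proof
      show "(\<Inter>i\<in>I. row c i) \<subseteq> Y"
      proof
        fix e assume e: "e \<in> (\<Inter>i\<in>I. row c i)"
        then have "e \<in> E" "\<forall>i\<in>I. i \<in> c e" using ne by (auto simp: row_def)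
        then show "e \<in> Y" using c(2)[of e] by blast
      qed
      show "Y \<subseteq> (\<Inter>i\<in>I. row c i)" using c(1) YE by (auto simp: row_def)
    qed
    then show "row c \<in> S"
      unfolding S_def row_def by (auto simp: PiE_iff)
  qed
  have step3: "(\<Sum>c\<in>T. \<Prod>e\<in>E. h e (c e)) = (\<Prod>e\<in>E. \<Sum>B\<in>(if e \<in> Y then {I} else Pow I - {I}). h e B)"
    unfolding T_def using fE fI by (intro prod_sum_PiE[symmetric]) auto
  have sumall: "(\<Sum>B\<in>Pow I. h e B) = 1" for e
    using prod_add[OF fI, of "\<lambda>i. F i e" "\<lambda>i. 1 - F i e"] unfolding h_def by simp
  have hI: "h e I = (\<Prod>i\<in>I. F i e)" for e unfolding h_def by simp
  have step4: "(\<Sum>B\<in>(if e \<in> Y then {I} else Pow I - {I}). h e B)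
       = (if e \<in> Y then (\<Prod>i\<in>I. F i e) else 1 - (\<Prod>i\<in>I. F i e))" for e
  proof (cases "e \<in> Y")
    case False
    have "(\<Sum>B\<in>Pow I - {I}. h e B) = (\<Sum>B\<in>Pow I. h e B) - h e I"
      using fI by (subst sum_diff1) auto
    then show ?thesis using False sumall hI by simp
  qed (simp add: hI)
  have "(\<Sum>Ys\<in>S. \<Prod>i\<in>I. mass E (F i) (Ys i)) = (\<Sum>Ys\<in>S. \<Prod>e\<in>E. h e (col Ys e))"
    using step1 by (rule sum.cong[OF refl])
  also have "\<dots> = (\<Prod>e\<in>E. if e \<in> Y then (\<Prod>i\<in>I. F i e) else 1 - (\<Prod>i\<in>I. F i e))"
    using step2 step3 step4 by simp
  also have "\<dots> = mass E (\<lambda>e. \<Prod>i\<in>I. F i e) Y" using mass_alt[OF YE fE] by simp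
  finally show ?thesis unfolding S_def .
qed

lemma mass_pow:
  assumes "Y \<subseteq> E"
  shows "mass E (fpow l \<mu>) (cpow E l Y) = mass E \<mu> Y"
proof -
  have "E - (E - Y) = Y" using assms by auto
  then show ?thesis unfolding mass_def fpow_def cpow_def by (simp add: mult.commute)
qed

theorem lemma1:
  fixes E :: "'a set" and n :: nat and X :: "nat \<Rightarrow> 'a \<Rightarrow> real"
    and l :: "nat \<Rightarrow> nat" and j :: nat
  assumes "finite E" and "n \<ge> 1"
    and "\<And>i e. i < n \<Longrightarrow> e \<in> E \<Longrightarrow> 0 \<le> X i e \<and> X i e \<le> 1"
    and "\<And>i. i < n \<Longrightarrow> l i \<in> {0, 1}"
    and "j \<in> {0..card E}"
  shows "FA E 1 (\<lambda>Ys. Q_exactly j (Ys 0)) (\<lambda>_. fint n l X)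
           = (\<Sum>Y\<in>{Y. Y \<subseteq> E \<and> card Y = j}. mass E (fint n l X) Y)
       \<and> (\<Sum>Y\<in>{Y. Y \<subseteq> E \<and> card Y = j}. mass E (fint n l X) Y)
           = (\<Sum>Ys\<in>{Ys \<in> PiE {..<n} (\<lambda>_. Pow E). card (\<Inter>i\<in>{..<n}. Ys i) = j}.
                 \<Prod>i<n. mass E (fpow (l i) (X i)) (Ys i))
       \<and> (\<Sum>Ys\<in>{Ys \<in> PiE {..<n} (\<lambda>_. Pow E). card (\<Inter>i\<in>{..<n}. Ys i) = j}.
                 \<Prod>i<n. mass E (fpow (l i) (X i)) (Ys i))
           = FA E n (\<lambda>Ys. Q_exactly j (Phi E n l Ys)) X"
proof (intro conjI)
  let ?P = "PiE {..<n} (\<lambda>_. Pow E)"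
  let ?G = "\<lambda>Ys. \<Prod>i<n. mass E (fpow (l i) (X i)) (Ys i)"
  have fE: "finite E" by fact
  have fP: "finite ?P" using fE by (intro finite_PiE) auto
  have ne: "{..<n} \<noteq> {}" using assms(2) lessThan_empty_iff by auto
  show "FA E 1 (\<lambda>Ys. Q_exactly j (Ys 0)) (\<lambda>_. fint n l X)
           = (\<Sum>Y\<in>{Y. Y \<subseteq> E \<and> card Y = j}. mass E (fint n l X) Y)"
  proof -
    have "FA E 1 (\<lambda>Ys. Q_exactly j (Ys 0)) (\<lambda>_. fint n l X)
        = (\<Sum>Ys\<in>PiE {..<Suc 0} (\<lambda>_. Pow E). mass E (fint n l X) (Ys 0) * Q_exactly j (Ys 0))"
      unfolding FA_def by simp
    also have "\<dots> = (\<Sum>Y\<in>Pow E. mass E (fint n l X) Y * Q_exactly j Y)"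
    proof (rule sum.reindex_bij_witness[where i="\<lambda>Y. (\<lambda>i\<in>{..<Suc 0}. Y)" and j="\<lambda>Ys. Ys 0"])
      fix Ys assume "Ys \<in> PiE {..<Suc 0} (\<lambda>_. Pow E)"
      then show "(\<lambda>i\<in>{..<Suc 0}. Ys 0) = Ys"
        by (auto simp: PiE_iff extensional_def fun_eq_iff)
    qed (auto simp: PiE_iff)
    also have "\<dots> = (\<Sum>Y\<in>{Y. Y \<subseteq> E \<and> card Y = j}. mass E (fint n l X) Y)"
    proof -
      have "(\<Sum>Y\<in>Pow E. mass E (fint n l X) Y * Q_exactly j Y)
          = (\<Sum>Y\<in>Pow E. if card Y = j then mass E (fint n l X) Y else 0)"
        unfolding Q_exactly_def by (intro sum.cong) auto
      also have "\<dots> = (\<Sum>Y\<in>{Y \<in> Pow E. card Y = j}. mass E (fint n l X) Y)"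
        using fE by (intro sum.inter_filter[symmetric]) simp
      finally show ?thesis by (simp add: Pow_def)
    qed
    finally show ?thesis .
  qed
  show "(\<Sum>Y\<in>{Y. Y \<subseteq> E \<and> card Y = j}. mass E (fint n l X) Y)
           = (\<Sum>Ys\<in>{Ys \<in> ?P. card (\<Inter>i\<in>{..<n}. Ys i) = j}. ?G Ys)"
  proof -
    have sub: "(\<Inter>i\<in>{..<n}. Ys i) \<subseteq> E" if "Ys \<in> ?P" for Ys
      using that ne by (auto simp: PiE_iff)
    have "(\<Sum>Ys\<in>{Ys \<in> ?P. card (\<Inter>i\<in>{..<n}. Ys i) = j}. ?G Ys)
       = (\<Sum>Y\<in>{Y. Y \<subseteq> E \<and> card Y = j}. \<Sum>Ys\<in>{Ys \<in> {Ys \<in> ?P. card (\<Inter>i\<in>{..<n}. Ys i) = j}. (\<Inter>i\<in>{..<n}. Ys i) = Y}. ?G Ys)"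
      using fP fE sub by (intro sum.group[symmetric]) auto
    also have "\<dots> = (\<Sum>Y\<in>{Y. Y \<subseteq> E \<and> card Y = j}. \<Sum>Ys\<in>{Ys \<in> ?P. (\<Inter>i\<in>{..<n}. Ys i) = Y}. ?G Ys)"
      by (intro sum.cong refl) (auto intro!: sum.cong)
    also have "\<dots> = (\<Sum>Y\<in>{Y. Y \<subseteq> E \<and> card Y = j}. mass E (fint n l X) Y)"
      unfolding fint_def
      by (intro sum.cong refl fiber[where F="\<lambda>i. fpow (l i) (X i)", OF fE]) (use ne in auto)
    finally show ?thesis by simp
  qed
  show "(\<Sum>Ys\<in>{Ys \<in> ?P. card (\<Inter>i\<in>{..<n}. Ys i) = j}. ?G Ys)
           = FA E n (\<lambda>Ys. Q_exactly j (Phi E n l Ys)) X"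
  proof -
    let ?phi = "\<lambda>Ys. (\<lambda>i\<in>{..<n}. cpow E (l i) (Ys i))"
    have "(\<Sum>Ys\<in>{Ys \<in> ?P. card (\<Inter>i\<in>{..<n}. Ys i) = j}. ?G Ys)
        = (\<Sum>Ys\<in>?P. ?G Ys * Q_exactly j (\<Inter>i\<in>{..<n}. Ys i))"
      using fP by (simp add: sum.inter_filter Q_exactly_def if_distrib cong: if_cong)
    also have "\<dots> = (\<Sum>Ys\<in>?P. (\<Prod>i<n. mass E (X i) (Ys i)) * Q_exactly j (Phi E n l Ys))"
    proof (rule sym, rule sum.reindex_bij_witness[where i="?phi" and j="?phi"])
      fix Ys assume Ys: "Ys \<in> ?P"
      show "?phi (?phi Ys) = Ys"
        using Ys by (auto simp: PiE_iff extensional_def fun_eq_iff cpow_def)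
      show "?phi Ys \<in> ?P" using Ys by (auto simp: PiE_iff cpow_def)
      have "?G (?phi Ys) = (\<Prod>i<n. mass E (X i) (Ys i))"
        using Ys by (intro prod.cong refl) (auto simp: PiE_iff intro!: mass_pow)
      moreover have "(\<Inter>i\<in>{..<n}. ?phi Ys i) = Phi E n l Ys"
        unfolding Phi_def by auto
      ultimately show "?G (?phi Ys) * Q_exactly j (\<Inter>i\<in>{..<n}. ?phi Ys i)
          = (\<Prod>i<n. mass E (X i) (Ys i)) * Q_exactly j (Phi E n l Ys)" by simp
    qed (auto simp: PiE_iff extensional_def fun_eq_iff cpow_def)
    also have "\<dots> = FA E n (\<lambda>Ys. Q_exactly j (Phi E n l Ys)) X"
      unfolding FA_def by simp
    finally show ?thesis .
  qed
qed

end
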